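(* Let $U=(U_{ij})_{i,j=1}^M$, $U_{ij}\in M_M(\mathbb C)$, and $V=(V_{ab})_{a,b=1}^N$, $V_{ab}\in M_N(\mathbb C)$, be projective models and $Q\in M_{M\times N}(\mathbb T)$. Then the matrix $W^\circ=U\,{}_Q\!\otimes V$ given by $$(W^\circ_{ia,jb})_{kc,ld}=\frac{Q_{ka}Q_{lb}}{Q_{kb}Q_{la}}(U_{ij})_{kl}(V_{ab})_{cd}$$ is a projective model. Moreover, with $W=U\otimes_QV$, we have $W'=U'\,{}_Q\!\otimes V'$ and $(W^\circ)'=U'\otimes_QV'$.
   Context: A square matrix with entries in a $C^*$-algebra is magic if its entries are orthogonal projections and each row and column sums to $1$. For $U=(U_{ij})_{i,j=1}^n$, $U_{ij}\in M_n(\mathbb C)$, $U'$ is defined by $(U'_{kl})_{ij}=(U_{ij})_{kl}$; $U$ is a projective model if $U$ and $U'$ are magic. The deformed tensor product $U\otimes_QV$ is defined by $((U\otimes_QV)_{ia,jb})_{kc,ld}=\frac{Q_{ic}Q_{jd}}{Q_{id}Q_{jc}}(U_{ij})_{kl}(V_{ab})_{cd}$, and $U\,{}_Q\!\otimes V$ by the formula for $W^\circ$ in the statement ($i,j,k,l\in\{1,\dots,M\}$, $a,b,c,d\in\{1,\dots,N\}$). *)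

theory Defs
  imports Complex_Main
begin

text \<open>A square matrix indexed by a finite set I, whose entries are matrices
  indexed by the same set I, is encoded as a function U with
  U i j k l = (U_ij)_kl. All indices range over I.\<close>

definition orth_proj :: "'a set \<Rightarrow> ('a \<Rightarrow> 'a \<Rightarrow> complex) \<Rightarrow> bool" where
  "orth_proj I P \<longleftrightarrow>
     (\<forall>k\<in>I. \<forall>l\<in>I. P l k = cnj (P k l)) \<and>
     (\<forall>k\<in>I. \<forall>l\<in>I. (\<Sum>m\<in>I. P k m * P m l) = P k l)"

definition magic :: "'a set \<Rightarrow> ('a \<Rightarrow> 'a \<Rightarrow> 'a \<Rightarrow> 'a \<Rightarrow> complex) \<Rightarrow> bool" where
  "magic I U \<longleftrightarrow>
     (\<forall>i\<in>I. \<forall>j\<in>I. orth_proj I (U i j)) \<and>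
     (\<forall>i\<in>I. \<forall>k\<in>I. \<forall>l\<in>I. (\<Sum>j\<in>I. U i j k l) = (if k = l then 1 else 0)) \<and>
     (\<forall>j\<in>I. \<forall>k\<in>I. \<forall>l\<in>I. (\<Sum>i\<in>I. U i j k l) = (if k = l then 1 else 0))"

definition prime_model :: "('a \<Rightarrow> 'a \<Rightarrow> 'a \<Rightarrow> 'a \<Rightarrow> complex) \<Rightarrow> ('a \<Rightarrow> 'a \<Rightarrow> 'a \<Rightarrow> 'a \<Rightarrow> complex)" where
  "prime_model U = (\<lambda>i j k l. U k l i j)"

definition projective_model :: "'a set \<Rightarrow> ('a \<Rightarrow> 'a \<Rightarrow> 'a \<Rightarrow> 'a \<Rightarrow> complex) \<Rightarrow> bool" where
  "projective_model I U \<longleftrightarrow> magic I U \<and> magic I (prime_model U)"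

definition tensor_Q ::
  "(nat \<Rightarrow> nat \<Rightarrow> complex) \<Rightarrow> (nat \<Rightarrow> nat \<Rightarrow> nat \<Rightarrow> nat \<Rightarrow> complex) \<Rightarrow> (nat \<Rightarrow> nat \<Rightarrow> nat \<Rightarrow> nat \<Rightarrow> complex)
   \<Rightarrow> (nat \<times> nat \<Rightarrow> nat \<times> nat \<Rightarrow> nat \<times> nat \<Rightarrow> nat \<times> nat \<Rightarrow> complex)" where
  "tensor_Q Q U V = (\<lambda>(i,a) (j,b) (k,c) (l,d).
      Q i c * Q j d / (Q i d * Q j c) * U i j k l * V a b c d)"

definition Q_tensor ::
  "(nat \<Rightarrow> nat \<Rightarrow> complex) \<Rightarrow> (nat \<Rightarrow> nat \<Rightarrow> nat \<Rightarrow> nat \<Rightarrow> complex) \<Rightarrow> (nat \<Rightarrow> nat \<Rightarrow> nat \<Rightarrow> nat \<Rightarrow> complex)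
   \<Rightarrow> (nat \<times> nat \<Rightarrow> nat \<times> nat \<Rightarrow> nat \<times> nat \<Rightarrow> nat \<times> nat \<Rightarrow> complex)" where
  "Q_tensor Q U V = (\<lambda>(i,a) (j,b) (k,c) (l,d).
      Q k a * Q l b / (Q k b * Q l a) * U i j k l * V a b c d)"

end

theory Submission
  imports Defs
begin

lemma cnj_unit: "cmod z = 1 \<Longrightarrow> cnj z = inverse z"
proof -
  assume h: "cmod z = 1"
  have "z * cnj z = 1" using complex_norm_square[of z] h by simp
  moreover have "z \<noteq> 0" using h by auto
  ultimately show ?thesis by (simp add: field_simps)
qed

lemma orth_proj_cong:
  assumes "orth_proj I P" "\<forall>k\<in>I. \<forall>l\<in>I. P k l = P' k l"
  shows "orth_proj I P'"
proof -
  have h: "\<forall>k\<in>I. \<forall>l\<in>I. P l k = cnj (P k l)" "\<forall>k\<in>I. \<forall>l\<in>I. (\<Sum>m\<in>I. P k m * P m l) = P k l"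
    using assms(1) unfolding orth_proj_def by blast+
  have e: "\<And>k l. k \<in> I \<Longrightarrow> l \<in> I \<Longrightarrow> P' k l = P k l" using assms(2) by simp
  show ?thesis unfolding orth_proj_def
  proof (intro conjI ballI)
    fix k l assume kl: "k \<in> I" "l \<in> I"
    show "P' l k = cnj (P' k l)" using h(1) kl e by metis
    have "(\<Sum>m\<in>I. P' k m * P' m l) = (\<Sum>m\<in>I. P k m * P m l)"
      by (rule sum.cong) (simp_all add: e kl)
    then show "(\<Sum>m\<in>I. P' k m * P' m l) = P' k l" using h(2) kl e by simp
  qed
qed

lemma phase_proj:
  assumes P: "orth_proj I P" and R: "orth_proj J R"
    and f: "\<forall>k\<in>I. \<forall>c\<in>J. cnj (f k c) * f k c = 1"
  shows "orth_proj (I\<times>J) (\<lambda>(k,c) (l,d). f k c * cnj (f l d) * P k l * R c d)"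
  unfolding orth_proj_def
proof (intro conjI ballI)
  fix x y assume x: "x \<in> I\<times>J" and y: "y \<in> I\<times>J"
  obtain k c where xk: "x = (k,c)" by (cases x)
  obtain l d where yl: "y = (l,d)" by (cases y)
  have kl: "k \<in> I" "l \<in> I" "c \<in> J" "d \<in> J" using x y xk yl by auto
  have "P l k = cnj (P k l)" "R d c = cnj (R c d)"
    using P R kl unfolding orth_proj_def by blast+
  then show "(case y of (k, c) \<Rightarrow> \<lambda>(l, d). f k c * cnj (f l d) * P k l * R c d) x =
         cnj ((case x of (k, c) \<Rightarrow> \<lambda>(l, d). f k c * cnj (f l d) * P k l * R c d) y)"
    using xk yl by simp
  have sP: "(\<Sum>m\<in>I. P k m * P m l) = P k l" and sR: "(\<Sum>e\<in>J. R c e * R e d) = R c d"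
    using P R kl unfolding orth_proj_def by blast+
  have "(\<Sum>z\<in>I\<times>J. (case x of (k, c) \<Rightarrow> \<lambda>(l, d). f k c * cnj (f l d) * P k l * R c d) z *
          (case z of (k, c) \<Rightarrow> \<lambda>(l, d). f k c * cnj (f l d) * P k l * R c d) y)
       = (\<Sum>z\<in>I\<times>J. f k c * cnj (f l d) * ((P k (fst z) * P (fst z) l) * (R c (snd z) * R (snd z) d)))"
  proof (rule sum.cong[OF refl])
    fix z assume z: "z \<in> I\<times>J"
    obtain m e where zm: "z = (m,e)" by (cases z)
    have h: "cnj (f m e) * f m e = 1" using f z zm by auto
    have "(case x of (k, c) \<Rightarrow> \<lambda>(l, d). f k c * cnj (f l d) * P k l * R c d) z *
          (case z of (k, c) \<Rightarrow> \<lambda>(l, d). f k c * cnj (f l d) * P k l * R c d) y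
        = (cnj (f m e) * f m e) * (f k c * cnj (f l d) * ((P k (fst z) * P (fst z) l) * (R c (snd z) * R (snd z) d)))"
      using xk yl zm by (simp add: mult_ac)
    then show "(case x of (k, c) \<Rightarrow> \<lambda>(l, d). f k c * cnj (f l d) * P k l * R c d) z *
          (case z of (k, c) \<Rightarrow> \<lambda>(l, d). f k c * cnj (f l d) * P k l * R c d) y
        = f k c * cnj (f l d) * ((P k (fst z) * P (fst z) l) * (R c (snd z) * R (snd z) d))"
      using h by simp
  qed
  also have "\<dots> = (\<Sum>m\<in>I. \<Sum>e\<in>J. f k c * cnj (f l d) * (P k m * P m l * (R c e * R e d)))"
    by (simp add: sum.cartesian_product split_def)
  also have "\<dots> = f k c * cnj (f l d) * ((\<Sum>m\<in>I. P k m * P m l) * (\<Sum>e\<in>J. R c e * R e d))"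
    by (subst sum_product) (simp only: sum_distrib_left)
  also have "\<dots> = (case x of (k, c) \<Rightarrow> \<lambda>(l, d). f k c * cnj (f l d) * P k l * R c d) y"
    using sP sR xk yl by (simp add: mult.assoc)
  finally show "(\<Sum>z\<in>I\<times>J. (case x of (k, c) \<Rightarrow> \<lambda>(l, d). f k c * cnj (f l d) * P k l * R c d) z *
          (case z of (k, c) \<Rightarrow> \<lambda>(l, d). f k c * cnj (f l d) * P k l * R c d) y)
       = (case x of (k, c) \<Rightarrow> \<lambda>(l, d). f k c * cnj (f l d) * P k l * R c d) y" .
qed

lemma fac_eq:
  assumes "cmod x = 1" "cmod y = 1" "cmod z = 1" "cmod w = 1"
  shows "x * y / (z * w) = x / z * cnj (w / y)"
proof -
  have "cnj (w / y) = inverse w / inverse y"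
    using assms by (simp add: cnj_unit)
  also have "\<dots> = y / w" by (simp add: divide_inverse mult.commute)
  finally show ?thesis by simp
qed

lemma unit_div:
  assumes "cmod x = 1" "cmod y = 1" shows "cnj (x / y) * (x / y) = 1"
proof -
  have "cmod (x / y) = 1" using assms by (simp add: norm_divide)
  then have "(x/y) * cnj (x/y) = 1" using complex_norm_square[of "x/y"] by simp
  then show ?thesis by (simp add: mult.commute)
qed

lemma magic_Qt:
  fixes U V :: "nat \<Rightarrow> nat \<Rightarrow> nat \<Rightarrow> nat \<Rightarrow> complex"
  assumes U: "magic I U" and V: "magic J V" and fin: "finite I" "finite J"
    and Q: "\<forall>k\<in>I. \<forall>a\<in>J. cmod (Q k a) = 1"
  shows "magic (I\<times>J) (Q_tensor Q U V)"
proof -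
  have Up: "\<forall>i\<in>I. \<forall>j\<in>I. orth_proj I (U i j)"
   and Ur: "\<forall>i\<in>I. \<forall>k\<in>I. \<forall>l\<in>I. (\<Sum>j\<in>I. U i j k l) = (if k = l then 1 else 0)"
   and Uc: "\<forall>j\<in>I. \<forall>k\<in>I. \<forall>l\<in>I. (\<Sum>i\<in>I. U i j k l) = (if k = l then 1 else 0)"
    using U unfolding magic_def by blast+
  have Vp: "\<forall>i\<in>J. \<forall>j\<in>J. orth_proj J (V i j)"
   and Vr: "\<forall>i\<in>J. \<forall>k\<in>J. \<forall>l\<in>J. (\<Sum>j\<in>J. V i j k l) = (if k = l then 1 else 0)"
   and Vc: "\<forall>j\<in>J. \<forall>k\<in>J. \<forall>l\<in>J. (\<Sum>i\<in>J. V i j k l) = (if k = l then 1 else 0)"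
    using V unfolding magic_def by blast+
  have Qnz: "\<And>k a. k \<in> I \<Longrightarrow> a \<in> J \<Longrightarrow> Q k a \<noteq> 0" using Q by force
  show ?thesis
  unfolding magic_def
proof (intro conjI ballI)
  fix x y assume x: "x \<in> I\<times>J" and y: "y \<in> I\<times>J"
  obtain i a where xi: "x = (i,a)" by (cases x)
  obtain j b where yj: "y = (j,b)" by (cases y)
  have ij: "i \<in> I" "j \<in> I" "a \<in> J" "b \<in> J" using x y xi yj by auto
  have "orth_proj (I\<times>J) (\<lambda>(k,c) (l,d). Q k a / Q k b * cnj (Q l a / Q l b) * U i j k l * V a b c d)"
    apply (rule phase_proj[where f="\<lambda>k c. Q k a / Q k b"])
    using Up Vp ij apply blast+
    apply (intro ballI unit_div) using Q ij by auto
  then show "orth_proj (I\<times>J) (Q_tensor Q U V x y)"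
  proof (rule orth_proj_cong, intro ballI)
    fix u v assume u: "u \<in> I\<times>J" and v: "v \<in> I\<times>J"
    obtain k c where uk: "u = (k,c)" by (cases u)
    obtain l d where vl: "v = (l,d)" by (cases v)
    have eq: "Q k a*Q l b/(Q k b*Q l a) = Q k a/Q k b * cnj (Q l a/Q l b)"
      using Q ij u v uk vl by (intro fac_eq) auto
    show "(\<lambda>(k,c) (l,d). Q k a / Q k b * cnj (Q l a / Q l b) * U i j k l * V a b c d) u v
       = Q_tensor Q U V x y u v"
      by (simp only: Q_tensor_def xi yj uk vl prod.case eq)
  qed
next
  fix x y z assume x: "x \<in> I\<times>J" and y: "y \<in> I\<times>J" and z: "z \<in> I\<times>J"
  obtain i a where xi: "x = (i,a)" by (cases x)
  obtain k c where yk: "y = (k,c)" by (cases y)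
  obtain l d where zl: "z = (l,d)" by (cases z)
  have ij: "i \<in> I" "k \<in> I" "l \<in> I" "a \<in> J" "c \<in> J" "d \<in> J" using x y z xi yk zl by auto
  have "(\<Sum>w\<in>I\<times>J. Q_tensor Q U V x w y z)
      = (\<Sum>j\<in>I. \<Sum>b\<in>J. Q k a * Q l b / (Q k b * Q l a) * U i j k l * V a b c d)"
    by (simp add: sum.cartesian_product Q_tensor_def xi yk zl split_def)
  also have "\<dots> = (\<Sum>b\<in>J. Q k a * Q l b / (Q k b * Q l a) * V a b c d * (\<Sum>j\<in>I. U i j k l))"
    by (subst sum.swap, rule sum.cong[OF refl]) (simp add: sum_distrib_left sum_divide_distrib mult_ac)
  also have "\<dots> = (if y = z then 1 else 0)"
  proof (cases "k = l")
    case True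
    have s1: "(\<Sum>j\<in>I. U i j k l) = 1" using Ur ij True by simp
    have "(\<Sum>b\<in>J. Q k a * Q l b / (Q k b * Q l a) * V a b c d * (\<Sum>j\<in>I. U i j k l))
        = (\<Sum>b\<in>J. V a b c d)"
    proof (rule sum.cong[OF refl])
      fix b assume "b \<in> J"
      then have "Q k b \<noteq> 0" "Q k a \<noteq> 0" using Qnz ij by auto
      then show "Q k a * Q l b / (Q k b * Q l a) * V a b c d * (\<Sum>j\<in>I. U i j k l) = V a b c d"
        using s1 True by simp
    qed
    also have "\<dots> = (if c = d then 1 else 0)" using Vr ij by blast
    finally show ?thesis using True yk zl by simp
  next
    case False
    have "(\<Sum>j\<in>I. U i j k l) = 0" using Ur ij False by simp
    then show ?thesis using False yk zl by simp
  qed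
  finally show "(\<Sum>w\<in>I\<times>J. Q_tensor Q U V x w y z) = (if y = z then 1 else 0)" .
next
  fix x y z assume x: "x \<in> I\<times>J" and y: "y \<in> I\<times>J" and z: "z \<in> I\<times>J"
  obtain j b where xi: "x = (j,b)" by (cases x)
  obtain k c where yk: "y = (k,c)" by (cases y)
  obtain l d where zl: "z = (l,d)" by (cases z)
  have ij: "j \<in> I" "k \<in> I" "l \<in> I" "b \<in> J" "c \<in> J" "d \<in> J" using x y z xi yk zl by auto
  have "(\<Sum>w\<in>I\<times>J. Q_tensor Q U V w x y z)
      = (\<Sum>i\<in>I. \<Sum>a\<in>J. Q k a * Q l b / (Q k b * Q l a) * U i j k l * V a b c d)"
    by (simp add: sum.cartesian_product Q_tensor_def xi yk zl split_def)
  also have "\<dots> = (\<Sum>a\<in>J. Q k a * Q l b / (Q k b * Q l a) * V a b c d * (\<Sum>i\<in>I. U i j k l))"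
    by (subst sum.swap, rule sum.cong[OF refl]) (simp add: sum_distrib_left sum_divide_distrib mult_ac)
  also have "\<dots> = (if y = z then 1 else 0)"
  proof (cases "k = l")
    case True
    have s1: "(\<Sum>i\<in>I. U i j k l) = 1" using Uc ij True by simp
    have "(\<Sum>a\<in>J. Q k a * Q l b / (Q k b * Q l a) * V a b c d * (\<Sum>i\<in>I. U i j k l))
        = (\<Sum>a\<in>J. V a b c d)"
    proof (rule sum.cong[OF refl])
      fix a assume "a \<in> J"
      then have "Q k b \<noteq> 0" "Q k a \<noteq> 0" using Qnz ij by auto
      then show "Q k a * Q l b / (Q k b * Q l a) * V a b c d * (\<Sum>i\<in>I. U i j k l) = V a b c d"
        using s1 True by simp
    qed
    also have "\<dots> = (if c = d then 1 else 0)" using Vc ij by blast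
    finally show ?thesis using True yk zl by simp
  next
    case False
    have "(\<Sum>i\<in>I. U i j k l) = 0" using Uc ij False by simp
    then show ?thesis using False yk zl by simp
  qed
  finally show "(\<Sum>w\<in>I\<times>J. Q_tensor Q U V w x y z) = (if y = z then 1 else 0)" .
qed
qed

lemma magic_tQ:
  fixes U V :: "nat \<Rightarrow> nat \<Rightarrow> nat \<Rightarrow> nat \<Rightarrow> complex"
  assumes U: "magic I U" and V: "magic J V" and fin: "finite I" "finite J"
    and Q: "\<forall>k\<in>I. \<forall>a\<in>J. cmod (Q k a) = 1"
  shows "magic (I\<times>J) (tensor_Q Q U V)"
proof -
  have Up: "\<forall>i\<in>I. \<forall>j\<in>I. orth_proj I (U i j)"
   and Ur: "\<forall>i\<in>I. \<forall>k\<in>I. \<forall>l\<in>I. (\<Sum>j\<in>I. U i j k l) = (if k = l then 1 else 0)"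
   and Uc: "\<forall>j\<in>I. \<forall>k\<in>I. \<forall>l\<in>I. (\<Sum>i\<in>I. U i j k l) = (if k = l then 1 else 0)"
    using U unfolding magic_def by blast+
  have Vp: "\<forall>i\<in>J. \<forall>j\<in>J. orth_proj J (V i j)"
   and Vr: "\<forall>i\<in>J. \<forall>k\<in>J. \<forall>l\<in>J. (\<Sum>j\<in>J. V i j k l) = (if k = l then 1 else 0)"
   and Vc: "\<forall>j\<in>J. \<forall>k\<in>J. \<forall>l\<in>J. (\<Sum>i\<in>J. V i j k l) = (if k = l then 1 else 0)"
    using V unfolding magic_def by blast+
  have Qnz: "\<And>k a. k \<in> I \<Longrightarrow> a \<in> J \<Longrightarrow> Q k a \<noteq> 0" using Q by force
  show ?thesis
  unfolding magic_def
proof (intro conjI ballI)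
  fix x y assume x: "x \<in> I\<times>J" and y: "y \<in> I\<times>J"
  obtain i a where xi: "x = (i,a)" by (cases x)
  obtain j b where yj: "y = (j,b)" by (cases y)
  have ij: "i \<in> I" "j \<in> I" "a \<in> J" "b \<in> J" using x y xi yj by auto
  have "orth_proj (I\<times>J) (\<lambda>(k,c) (l,d). Q i c / Q j c * cnj (Q i d / Q j d) * U i j k l * V a b c d)"
    apply (rule phase_proj[where f="\<lambda>k c. Q i c / Q j c"])
    using Up Vp ij apply blast+
    apply (intro ballI unit_div) using Q ij by auto
  then show "orth_proj (I\<times>J) (tensor_Q Q U V x y)"
  proof (rule orth_proj_cong, intro ballI)
    fix u v assume u: "u \<in> I\<times>J" and v: "v \<in> I\<times>J"
    obtain k c where uk: "u = (k,c)" by (cases u)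
    obtain l d where vl: "v = (l,d)" by (cases v)
    have eq0: "Q i c*Q j d/(Q j c*Q i d) = Q i c/Q j c * cnj (Q i d/Q j d)"
      using Q ij u v uk vl by (intro fac_eq) auto
    have eq: "Q i c*Q j d/(Q i d*Q j c) = Q i c/Q j c * cnj (Q i d/Q j d)"
      using eq0 by (simp add: mult.commute)
    show "(\<lambda>(k,c) (l,d). Q i c / Q j c * cnj (Q i d / Q j d) * U i j k l * V a b c d) u v
       = tensor_Q Q U V x y u v"
      by (simp only: tensor_Q_def xi yj uk vl prod.case eq)
  qed
next
  fix x y z assume x: "x \<in> I\<times>J" and y: "y \<in> I\<times>J" and z: "z \<in> I\<times>J"
  obtain i a where xi: "x = (i,a)" by (cases x)
  obtain k c where yk: "y = (k,c)" by (cases y)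
  obtain l d where zl: "z = (l,d)" by (cases z)
  have ij: "i \<in> I" "k \<in> I" "l \<in> I" "a \<in> J" "c \<in> J" "d \<in> J" using x y z xi yk zl by auto
  have "(\<Sum>w\<in>I\<times>J. tensor_Q Q U V x w y z)
      = (\<Sum>j\<in>I. \<Sum>b\<in>J. Q i c * Q j d / (Q i d * Q j c) * U i j k l * V a b c d)"
    by (simp add: sum.cartesian_product tensor_Q_def xi yk zl split_def)
  also have "\<dots> = (\<Sum>j\<in>I. Q i c * Q j d / (Q i d * Q j c) * U i j k l * (\<Sum>b\<in>J. V a b c d))"
    by (simp add: sum_distrib_left)
  also have "\<dots> = (if y = z then 1 else 0)"
  proof (cases "c = d")
    case True
    have s1: "(\<Sum>b\<in>J. V a b c d) = 1" using Vr ij True by simp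
    have "(\<Sum>j\<in>I. Q i c * Q j d / (Q i d * Q j c) * U i j k l * (\<Sum>b\<in>J. V a b c d))
        = (\<Sum>j\<in>I. U i j k l)"
    proof (rule sum.cong[OF refl])
      fix j assume "j \<in> I"
      then have "Q j c \<noteq> 0" "Q i c \<noteq> 0" using Qnz ij by auto
      then show "Q i c * Q j d / (Q i d * Q j c) * U i j k l * (\<Sum>b\<in>J. V a b c d) = U i j k l"
        using s1 True by simp
    qed
    also have "\<dots> = (if k = l then 1 else 0)" using Ur ij by blast
    finally show ?thesis using True yk zl by simp
  next
    case False
    have "(\<Sum>b\<in>J. V a b c d) = 0" using Vr ij False by simp
    then show ?thesis using False yk zl by simp
  qed
  finally show "(\<Sum>w\<in>I\<times>J. tensor_Q Q U V x w y z) = (if y = z then 1 else 0)" .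
next
  fix x y z assume x: "x \<in> I\<times>J" and y: "y \<in> I\<times>J" and z: "z \<in> I\<times>J"
  obtain j b where xi: "x = (j,b)" by (cases x)
  obtain k c where yk: "y = (k,c)" by (cases y)
  obtain l d where zl: "z = (l,d)" by (cases z)
  have ij: "j \<in> I" "k \<in> I" "l \<in> I" "b \<in> J" "c \<in> J" "d \<in> J" using x y z xi yk zl by auto
  have "(\<Sum>w\<in>I\<times>J. tensor_Q Q U V w x y z)
      = (\<Sum>i\<in>I. \<Sum>a\<in>J. Q i c * Q j d / (Q i d * Q j c) * U i j k l * V a b c d)"
    by (simp add: sum.cartesian_product tensor_Q_def xi yk zl split_def)
  also have "\<dots> = (\<Sum>i\<in>I. Q i c * Q j d / (Q i d * Q j c) * U i j k l * (\<Sum>a\<in>J. V a b c d))"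
    by (simp add: sum_distrib_left)
  also have "\<dots> = (if y = z then 1 else 0)"
  proof (cases "c = d")
    case True
    have s1: "(\<Sum>a\<in>J. V a b c d) = 1" using Vc ij True by simp
    have "(\<Sum>i\<in>I. Q i c * Q j d / (Q i d * Q j c) * U i j k l * (\<Sum>a\<in>J. V a b c d))
        = (\<Sum>i\<in>I. U i j k l)"
    proof (rule sum.cong[OF refl])
      fix i assume "i \<in> I"
      then have "Q j c \<noteq> 0" "Q i c \<noteq> 0" using Qnz ij by auto
      then show "Q i c * Q j d / (Q i d * Q j c) * U i j k l * (\<Sum>a\<in>J. V a b c d) = U i j k l"
        using s1 True by simp
    qed
    also have "\<dots> = (if k = l then 1 else 0)" using Uc ij by blast
    finally show ?thesis using True yk zl by simp
  next
    case False
    have "(\<Sum>a\<in>J. V a b c d) = 0" using Vc ij False by simp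
    then show ?thesis using False yk zl by simp
  qed
  finally show "(\<Sum>w\<in>I\<times>J. tensor_Q Q U V w x y z) = (if y = z then 1 else 0)" .
qed
qed

lemma prime1: "prime_model (tensor_Q Q U V) = Q_tensor Q (prime_model U) (prime_model V)"
  by (intro ext) (auto simp: prime_model_def tensor_Q_def Q_tensor_def split: prod.split)

lemma prime2: "prime_model (Q_tensor Q U V) = tensor_Q Q (prime_model U) (prime_model V)"
  by (intro ext) (auto simp: prime_model_def tensor_Q_def Q_tensor_def split: prod.split)

theorem proposition2p5:
  fixes M N :: nat
    and U V :: "nat \<Rightarrow> nat \<Rightarrow> nat \<Rightarrow> nat \<Rightarrow> complex"
    and Q :: "nat \<Rightarrow> nat \<Rightarrow> complex"
  assumes "projective_model {0..<M} U"
    and "projective_model {0..<N} V"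
    and "\<forall>k<M. \<forall>a<N. cmod (Q k a) = 1"
  shows "projective_model ({0..<M} \<times> {0..<N}) (Q_tensor Q U V)
    \<and> prime_model (tensor_Q Q U V) = Q_tensor Q (prime_model U) (prime_model V)
    \<and> prime_model (Q_tensor Q U V) = tensor_Q Q (prime_model U) (prime_model V)"
proof -
  have Q: "\<forall>k\<in>{0..<M}. \<forall>a\<in>{0..<N}. cmod (Q k a) = 1" using assms(3) by simp
  have "magic ({0..<M} \<times> {0..<N}) (Q_tensor Q U V)"
    using assms(1,2) Q unfolding projective_model_def by (intro magic_Qt) auto
  moreover have "magic ({0..<M} \<times> {0..<N}) (prime_model (Q_tensor Q U V))"
    unfolding prime2
    using assms(1,2) Q unfolding projective_model_def by (intro magic_tQ) auto
  ultimately show ?thesis unfolding projective_model_def using prime1 prime2 by blast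
qed

end
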